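(* Let $z:[0,\infty)\to C$ be a strong solution of the differential inclusion $\dot z(t)\in S(z(t))$ with $0\notin S(z(0))$. Then there exists $T>0$ such that $$\varphi(z(T))<\sup_{t\in[0,T]}\varphi(z(t))\le\varphi(z(0)).$$
   Context: $H$ is a real Hilbert space with inner product $\langle\cdot,\cdot\rangle$ and norm $\|\cdot\|$. $C\subset H$ is nonempty, bounded, convex and closed; $N_C(u)=\{z:\langle z,w-u\rangle\le0\ \forall w\in C\}$. On an open convex set $U\supset C$, $j\in C^{1,1}_L(U)$ (continuously Fréchet differentiable with $L$-Lipschitz gradient). $\eta:H\to\mathbb R$ is proper, convex, lower semicontinuous with $\mathrm{dom}(\eta)=H$, locally Lipschitz and bounded below on $C$, and there is $L_\eta:H\to\mathbb R$, bounded on bounded sets, with $L_\eta(u)\ge\sup_{z:\eta(z)\le\eta(u)}\frac{\eta(u)-\eta(z)}{\|u-z\|}$ for all $u$; $\partial\eta$ is its convex subdifferential. $\varphi:=j+\eta$ and $S(u):=-\nabla j(u)-\partial\eta(u)-N_C(u)$ for $u\in C$. A strong solution of $\dot z\in S(z)$ is a function $z\in C([0,\infty),H)$ that is absolutely continuous on every compact interval $[a,b]\subset(0,\infty)$ and satisfies $\dot z(t)\in S(z(t))$ for a.e. $t$. *)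

theory Defs
  imports "HOL-Analysis.Analysis"
begin

definition normal_cone :: "'a::real_inner set \<Rightarrow> 'a \<Rightarrow> 'a set" where
  "normal_cone C u = {z. \<forall>w\<in>C. inner z (w - u) \<le> 0}"

definition subdiff :: "('a::real_inner \<Rightarrow> real) \<Rightarrow> 'a \<Rightarrow> 'a set" where
  "subdiff f u = {g. \<forall>w. f u + inner g (w - u) \<le> f w}"

definition lsc :: "('a::topological_space \<Rightarrow> real) \<Rightarrow> bool" where
  "lsc f \<longleftrightarrow> (\<forall>c. closed {x. f x \<le> c})"

definition locally_lipschitz :: "('a::metric_space \<Rightarrow> 'b::metric_space) \<Rightarrow> bool" where
  "locally_lipschitz f \<longleftrightarrow> (\<forall>u. \<exists>e>0. \<exists>K. lipschitz_on K (ball u e) f)"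

definition abs_cont_on :: "real \<Rightarrow> real \<Rightarrow> (real \<Rightarrow> 'a::real_normed_vector) \<Rightarrow> bool" where
  "abs_cont_on a b f \<longleftrightarrow>
     (\<forall>\<epsilon>>0. \<exists>\<delta>>0. \<forall>(n::nat) (s::nat \<Rightarrow> real) (t::nat \<Rightarrow> real).
        (\<forall>k<n. a \<le> s k \<and> s k \<le> t k \<and> t k \<le> b) \<and>
        (\<forall>k<n. \<forall>l<n. k \<noteq> l \<longrightarrow> t k \<le> s l \<or> t l \<le> s k) \<and>
        (\<Sum>k<n. t k - s k) < \<delta>
        \<longrightarrow> (\<Sum>k<n. norm (f (t k) - f (s k))) < \<epsilon>)"

definition S_map :: "'a::real_inner set \<Rightarrow> ('a \<Rightarrow> 'a) \<Rightarrow> ('a \<Rightarrow> real) \<Rightarrow> 'a \<Rightarrow> 'a set" where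
  "S_map C gj eta u = {- gj u - g - n | g n. g \<in> subdiff eta u \<and> n \<in> normal_cone C u}"

definition strong_solution :: "'a::real_inner set \<Rightarrow> ('a \<Rightarrow> 'a) \<Rightarrow> ('a \<Rightarrow> real) \<Rightarrow> (real \<Rightarrow> 'a) \<Rightarrow> bool" where
  "strong_solution C gj eta z \<longleftrightarrow>
     (\<forall>t\<ge>0. z t \<in> C) \<and>
     continuous_on {0..} z \<and>
     (\<forall>a b. 0 < a \<longrightarrow> a \<le> b \<longrightarrow> abs_cont_on a b z) \<and>
     (AE t in lborel. 0 < t \<longrightarrow>
        (\<exists>v. (z has_vector_derivative v) (at t) \<and> v \<in> S_map C gj eta (z t)))"

end

theory Submission imports Defs begin

lemma nonoverlap_real:
  fixes c d c' d' :: real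
  assumes "c < d" "c' < d'" "{c<..<d} \<inter> {c'<..<d'} = {}"
  shows "d \<le> c' \<or> d' \<le> c"
proof (rule ccontr)
  assume "\<not> ?thesis"
  hence "max c c' < min d d'" using assms by auto
  hence "(max c c' + min d d')/2 \<in> {c<..<d} \<inter> {c'<..<d'}" by auto
  thus False using assms(3) by blast
qed

lemma ac_null_image:
  fixes g :: "real \<Rightarrow> real"
  assumes ac: "abs_cont_on a b g" and cont: "continuous_on {a..b} g"
    and S: "S \<subseteq> {a..b}" "negligible S" and ab: "a < b"
  shows "negligible (g ` S)"
proof -
  have "\<forall>e>0. \<exists>T. g ` S \<subseteq> T \<and> T \<in> lmeasurable \<and> measure lebesgue T \<le> e"
  proof (intro allI impI)
    fix e :: real assume e: "e > 0"
    obtain \<delta> where \<delta>: "\<delta>>0" and ac\<delta>: "\<forall>(n::nat) (s::nat\<Rightarrow>real) (t::nat\<Rightarrow>real). (\<forall>k<n. a \<le> s k \<and> s k \<le> t k \<and> t k \<le> b) \<and>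
        (\<forall>k<n. \<forall>l<n. k \<noteq> l \<longrightarrow> t k \<le> s l \<or> t l \<le> s k) \<and> (\<Sum>k<n. t k - s k) < \<delta>
        \<longrightarrow> (\<Sum>k<n. norm (g (t k) - g (s k))) < e"
      using ac e unfolding abs_cont_on_def by blast
    have Sm: "S \<in> lmeasurable" and S0: "measure lebesgue S = 0"
      using negligible_iff_measure S(2) by auto
    have Scb: "S \<subseteq> cbox a b" using S(1) by simp
    have d2: "\<delta>/2 > 0" using \<delta> by simp
    obtain D where Dc: "countable D"
      and DK: "\<And>K. K \<in> D \<Longrightarrow> K \<subseteq> cbox a b \<and> K \<noteq> {} \<and> (\<exists>c d. K = cbox c d)"
      and Dpw: "pairwise (\<lambda>A B. interior A \<inter> interior B = {}) D"
      and "\<And>u v. cbox u v \<in> D \<Longrightarrow> \<exists>n. \<forall>i \<in> Basis. v \<bullet> i - u \<bullet> i = (b \<bullet> i - a \<bullet> i)/2^n"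
      and Dint: "\<And>K. K \<in> D \<Longrightarrow> box a b \<noteq> {} \<Longrightarrow> interior K \<noteq> {}"
      and SD: "S \<subseteq> \<Union>D" and Dm: "\<Union>D \<in> lmeasurable"
      and Dmeas: "measure lebesgue (\<Union>D) \<le> measure lebesgue S + \<delta>/2"
      by (rule measurable_outer_intervals_bounded[OF Sm Scb d2]) blast
    have boxne: "box a b \<noteq> {}" using ab by simp
    have Kcd: "\<exists>c d. c < d \<and> K = {c..d}" if KD: "K \<in> D" for K
    proof -
      obtain c d where K: "K = cbox c d" using DK[OF KD] by blast
      have "interior K \<noteq> {}" using Dint[OF KD boxne] .
      hence "c < d" using K by auto
      thus ?thesis using K by auto
    qed
    have Kab: "K \<subseteq> {a..b}" if "K \<in> D" for K using DK[OF that] by simp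
    have Kex: "\<exists>x\<in>K. \<forall>y\<in>K. g x \<le> g y" "\<exists>x\<in>K. \<forall>y\<in>K. g y \<le> g x" if KD: "K \<in> D" for K
    proof -
      obtain c d where cd: "c < d" "K = {c..d}" using Kcd[OF KD] by blast
      have cK: "continuous_on K g" using continuous_on_subset[OF cont Kab[OF KD]] .
      show "\<exists>x\<in>K. \<forall>y\<in>K. g x \<le> g y"
        using continuous_attains_inf[of K g] cK cd by auto
      show "\<exists>x\<in>K. \<forall>y\<in>K. g y \<le> g x"
        using continuous_attains_sup[of K g] cK cd by auto
    qed
    define lo where "lo K = (SOME x. x \<in> K \<and> (\<forall>y\<in>K. g x \<le> g y))" for K
    define hi where "hi K = (SOME x. x \<in> K \<and> (\<forall>y\<in>K. g y \<le> g x))" for K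
    have lo: "lo K \<in> K \<and> (\<forall>y\<in>K. g (lo K) \<le> g y)" if "K \<in> D" for K
      unfolding lo_def using someI_ex[OF Kex(1)[OF that, unfolded Bex_def]] by blast
    have hi: "hi K \<in> K \<and> (\<forall>y\<in>K. g y \<le> g (hi K))" if "K \<in> D" for K
      unfolding hi_def using someI_ex[OF Kex(2)[OF that, unfolded Bex_def]] by blast
    define A where "A K = {g (lo K) .. g (hi K)}" for K
    have gS: "g ` S \<subseteq> (\<Union>K\<in>D. A K)"
    proof
      fix y assume "y \<in> g ` S"
      then obtain x where x: "x \<in> S" "y = g x" by blast
      then obtain K where K: "K \<in> D" "x \<in> K" using SD by blast
      thus "y \<in> (\<Union>K\<in>D. A K)" using lo[OF K(1)] hi[OF K(1)] x unfolding A_def by auto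
    qed
    have Am: "A K \<in> lmeasurable" for K unfolding A_def by simp
    have bound: "measure lebesgue (\<Union>K\<in>I'. A K) \<le> e" if I': "I' \<subseteq> D" "finite I'" for I'
    proof -
      have "measure lebesgue (\<Union>K\<in>I'. A K) \<le> (\<Sum>K\<in>I'. measure lebesgue (A K))"
        using measure_UNION_le[OF I'(2), of A lebesgue] Am by auto
      also have "\<dots> = (\<Sum>K\<in>I'. g (hi K) - g (lo K))"
        using lo hi I'(1) unfolding A_def by (intro sum.cong) auto
      also have "\<dots> \<le> e"
      proof -
        obtain f where f: "bij_betw f {0..<card I'} I'" using ex_bij_betw_nat_finite[OF I'(2)] by blast
        define n where "n = card I'"
        define s where "s k = min (lo (f k)) (hi (f k))" for k
        define t where "t k = max (lo (f k)) (hi (f k))" for k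
        have fD: "f k \<in> D" if "k < n" for k using f that I'(1) unfolding n_def bij_betw_def by auto
        have stK: "s k \<in> f k \<and> t k \<in> f k" if "k < n" for k
          using lo[OF fD[OF that]] hi[OF fD[OF that]] unfolding s_def t_def by (auto simp: min_def max_def)
        have sum_eq: "(\<Sum>K\<in>I'. g (hi K) - g (lo K)) = (\<Sum>k<n. norm (g (t k) - g (s k)))"
        proof -
          have "(\<Sum>K\<in>I'. g (hi K) - g (lo K)) = (\<Sum>k\<in>{0..<n}. g (hi (f k)) - g (lo (f k)))"
            using sum.reindex_bij_betw[OF f, of "\<lambda>K. g (hi K) - g (lo K)"] unfolding n_def by simp
          also have "\<dots> = (\<Sum>k<n. norm (g (t k) - g (s k)))"
          proof (rule sum.cong)
            fix k assume "k \<in> {..<n}"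
            hence k: "k < n" by simp
            have "g (lo (f k)) \<le> g (hi (f k))" using lo[OF fD[OF k]] hi[OF fD[OF k]] by blast
            thus "g (hi (f k)) - g (lo (f k)) = norm (g (t k) - g (s k))"
              unfolding s_def t_def by (auto simp: min_def max_def)
          qed (auto simp: atLeast0LessThan)
          finally show ?thesis .
        qed
        have c1: "\<forall>k<n. a \<le> s k \<and> s k \<le> t k \<and> t k \<le> b"
        proof (intro allI impI)
          fix k assume k: "k < n"
          show "a \<le> s k \<and> s k \<le> t k \<and> t k \<le> b"
            using stK[OF k] Kab[OF fD[OF k]] unfolding s_def t_def by auto
        qed
        have c2: "\<forall>k<n. \<forall>l<n. k \<noteq> l \<longrightarrow> t k \<le> s l \<or> t l \<le> s k"
        proof (intro allI impI)
          fix k l assume kl: "k < n" "l < n" "k \<noteq> l"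
          have fkl: "f k \<noteq> f l" using f kl unfolding bij_betw_def inj_on_def n_def by auto
          obtain c d where cd: "c < d" "f k = {c..d}" using Kcd[OF fD[OF kl(1)]] by blast
          obtain c' d' where cd': "c' < d'" "f l = {c'..d'}" using Kcd[OF fD[OF kl(2)]] by blast
          have "interior (f k) \<inter> interior (f l) = {}" using Dpw fD kl fkl unfolding pairwise_def by blast
          hence "{c<..<d} \<inter> {c'<..<d'} = {}" using cd cd' by simp
          hence "d \<le> c' \<or> d' \<le> c" using nonoverlap_real cd cd' by blast
          thus "t k \<le> s l \<or> t l \<le> s k" using stK[OF kl(1)] stK[OF kl(2)] cd cd' by auto
        qed
        have c3: "(\<Sum>k<n. t k - s k) < \<delta>"
        proof -
          have "(\<Sum>k<n. t k - s k) \<le> (\<Sum>k<n. measure lebesgue (f k))"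
          proof (rule sum_mono)
            fix k assume "k \<in> {..<n}"
            hence k: "k < n" by simp
            obtain c d where cd: "c < d" "f k = {c..d}" using Kcd[OF fD[OF k]] by blast
            show "t k - s k \<le> measure lebesgue (f k)" using stK[OF k] cd by auto
          qed
          also have "\<dots> = (\<Sum>K\<in>I'. measure lebesgue K)"
            using sum.reindex_bij_betw[OF f, of "measure lebesgue"] unfolding n_def
            by (simp add: atLeast0LessThan)
          also have "\<dots> = measure lebesgue (\<Union>I')"
          proof (rule measure_negligible_finite_Union[symmetric])
            show "finite I'" by fact
            show "K \<in> lmeasurable" if KI: "K \<in> I'" for K
            proof -
              obtain c d where "K = {c..d}" using Kcd I'(1) KI by blast
              thus ?thesis by simp
            qed
            show "pairwise (\<lambda>S T. negligible (S \<inter> T)) I'"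
              unfolding pairwise_def
            proof (intro ballI impI)
              fix K K' assume KK: "K \<in> I'" "K' \<in> I'" "K \<noteq> K'"
              obtain c d where cd: "c < d" "K = {c..d}" using Kcd KK I'(1) by blast
              obtain c' d' where cd': "c' < d'" "K' = {c'..d'}" using Kcd KK I'(1) by blast
              have "interior K \<inter> interior K' = {}" using Dpw KK I'(1) unfolding pairwise_def by blast
              hence "{c<..<d} \<inter> {c'<..<d'} = {}" using cd cd' by simp
              hence "d \<le> c' \<or> d' \<le> c" using nonoverlap_real cd cd' by blast
              hence sub: "K \<inter> K' \<subseteq> {d, d'}" using cd cd' by auto
              have "negligible {d, d'}" by (rule negligible_finite) simp
              thus "negligible (K \<inter> K')" using sub by (rule negligible_subset)
            qed
          qed
          also have "\<dots> \<le> measure lebesgue (\<Union>D)"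
          proof (rule measure_mono_fmeasurable)
            show "\<Union>I' \<subseteq> \<Union>D" using I'(1) by blast
            show "\<Union>D \<in> lmeasurable" by fact
            have "K \<in> sets lebesgue" if KI: "K \<in> I'" for K
            proof -
              obtain c d where "K = {c..d}" using Kcd I'(1) KI by blast
              thus ?thesis by simp
            qed
            thus "\<Union>I' \<in> sets lebesgue" using I'(2) by blast
          qed
          also have "\<dots> < \<delta>" using Dmeas S0 \<delta> by simp
          finally show ?thesis .
        qed
        have "(\<Sum>k<n. norm (g (t k) - g (s k))) < e" using ac\<delta>[rule_format, OF conjI[OF c1 conjI[OF c2 c3]]] .
        thus ?thesis using sum_eq by simp
      qed
      finally show ?thesis .
    qed
    have "(\<Union>K\<in>D. A K) \<in> lmeasurable" "measure lebesgue (\<Union>K\<in>D. A K) \<le> e"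
      using fmeasurable_UN_bound[OF Dc, of A lebesgue e] measure_UN_bound[OF Dc, of A lebesgue e] Am bound
      by auto
    thus "\<exists>T. g ` S \<subseteq> T \<and> T \<in> lmeasurable \<and> measure lebesgue T \<le> e" using gS by blast
  qed
  thus ?thesis using negligible_outer_le by blast
qed
lemma ac_affine:
  fixes F :: "real \<Rightarrow> real"
  assumes ac: "abs_cont_on a b F"
  shows "abs_cont_on a b (\<lambda>x. F x + c * x + d0)"
  unfolding abs_cont_on_def
proof (intro allI impI)
  fix e :: real assume e: "e > 0"
  have e2: "e/2 > 0" using e by simp
  obtain \<delta>1 where d1: "\<delta>1 > 0" and ac1: "\<forall>(n::nat) (s::nat\<Rightarrow>real) (t::nat\<Rightarrow>real). (\<forall>k<n. a \<le> s k \<and> s k \<le> t k \<and> t k \<le> b) \<and>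
        (\<forall>k<n. \<forall>l<n. k \<noteq> l \<longrightarrow> t k \<le> s l \<or> t l \<le> s k) \<and> (\<Sum>k<n. t k - s k) < \<delta>1
        \<longrightarrow> (\<Sum>k<n. norm (F (t k) - F (s k))) < e/2"
    using ac[unfolded abs_cont_on_def, rule_format, OF e2] by blast
  define \<delta> where "\<delta> = min \<delta>1 (e/(2*(\<bar>c\<bar>+1)))"
  have dpos: "\<delta> > 0" unfolding \<delta>_def using d1 e by (simp add: abs_if)
  show "\<exists>\<delta>>0. \<forall>(n::nat) (s::nat\<Rightarrow>real) (t::nat\<Rightarrow>real). (\<forall>k<n. a \<le> s k \<and> s k \<le> t k \<and> t k \<le> b) \<and>
        (\<forall>k<n. \<forall>l<n. k \<noteq> l \<longrightarrow> t k \<le> s l \<or> t l \<le> s k) \<and> (\<Sum>k<n. t k - s k) < \<delta>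
        \<longrightarrow> (\<Sum>k<n. norm ((F (t k) + c * t k + d0) - (F (s k) + c * s k + d0))) < e"
  proof (intro exI[of _ \<delta>] conjI allI impI dpos)
    fix n :: nat and s t :: "nat \<Rightarrow> real"
    assume H: "(\<forall>k<n. a \<le> s k \<and> s k \<le> t k \<and> t k \<le> b) \<and>
        (\<forall>k<n. \<forall>l<n. k \<noteq> l \<longrightarrow> t k \<le> s l \<or> t l \<le> s k) \<and> (\<Sum>k<n. t k - s k) < \<delta>"
    have "(\<Sum>k<n. t k - s k) < \<delta>1" using H unfolding \<delta>_def by simp
    hence A: "(\<Sum>k<n. norm (F (t k) - F (s k))) < e/2" using ac1 H by blast
    have B: "(\<Sum>k<n. t k - s k) \<le> e/(2*(\<bar>c\<bar>+1))" using H unfolding \<delta>_def by simp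
    have "(\<Sum>k<n. norm ((F (t k) + c * t k + d0) - (F (s k) + c * s k + d0)))
        \<le> (\<Sum>k<n. norm (F (t k) - F (s k)) + \<bar>c\<bar> * (t k - s k))"
    proof (rule sum_mono)
      fix i assume "i \<in> {..<n}"
      hence st: "s i \<le> t i" using H by auto
      have "norm ((F (t i) + c * t i + d0) - (F (s i) + c * s i + d0)) = \<bar>(F (t i) - F (s i)) + c * (t i - s i)\<bar>"
        by (simp add: algebra_simps)
      also have "\<dots> \<le> \<bar>F (t i) - F (s i)\<bar> + \<bar>c * (t i - s i)\<bar>" by (rule abs_triangle_ineq)
      also have "\<bar>c * (t i - s i)\<bar> = \<bar>c\<bar> * (t i - s i)" using st by (simp add: abs_mult)
      finally show "norm ((F (t i) + c * t i + d0) - (F (s i) + c * s i + d0)) \<le> norm (F (t i) - F (s i)) + \<bar>c\<bar> * (t i - s i)"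
        by simp
    qed
    also have "\<dots> = (\<Sum>k<n. norm (F (t k) - F (s k))) + \<bar>c\<bar> * (\<Sum>k<n. t k - s k)"
      by (simp add: sum.distrib sum_distrib_left)
    also have "\<dots> < e/2 + \<bar>c\<bar> * (e/(2*(\<bar>c\<bar>+1)))"
      using A B by (intro add_less_le_mono mult_left_mono) auto
    also have "\<dots> \<le> e"
    proof -
      have "\<bar>c\<bar> * (e/(2*(\<bar>c\<bar>+1))) \<le> e/2"
        using e by (simp add: field_simps)
      thus ?thesis by linarith
    qed
    finally show "(\<Sum>k<n. norm ((F (t k) + c * t k + d0) - (F (s k) + c * s k + d0))) < e" .
  qed
qed

lemma interval_not_null:
  assumes "a < (b::real)" "N \<in> null_sets lebesgue" shows "\<exists>x\<in>{a<..<b}. x \<notin> N"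
proof (rule ccontr)
  assume "\<not> ?thesis"
  hence "{a<..<b} \<subseteq> N" by auto
  hence "negligible {a<..<b}" using assms(2) negligible_iff_null_sets negligible_subset by blast
  hence "measure lebesgue {a<..<b} = 0" by (rule negligible_imp_measure0)
  thus False using assms(1) by simp
qed

lemma ac_mono:
  fixes F :: "real \<Rightarrow> real"
  assumes ab: "a \<le> b" and ac: "abs_cont_on a b F" and cont: "continuous_on {a..b} F"
    and N: "N \<in> null_sets lebesgue"
    and dini: "\<And>t. t \<in> {a<..b} \<Longrightarrow> t \<notin> N \<Longrightarrow> \<forall>\<epsilon>>0. \<exists>\<delta>>0. \<forall>s. 0 < s \<and> s < \<delta> \<longrightarrow> F t - F (t - s) \<le> \<epsilon> * s"
  shows "F b \<le> F a"
proof (rule ccontr)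
  assume "\<not> F b \<le> F a"
  hence Fab: "F a < F b" by simp
  have ab': "a < b" using ab Fab by (cases "a = b") auto
  define \<epsilon> where "\<epsilon> = (F b - F a) / (2 * (b - a))"
  have \<epsilon>: "\<epsilon> > 0" unfolding \<epsilon>_def using Fab ab' by simp
  define g where "g x = F x + (- \<epsilon>) * x + (\<epsilon> * a - F a)" for x
  have gac: "abs_cont_on a b g" unfolding g_def by (rule ac_affine[OF ac])
  have gcont: "continuous_on {a..b} g" unfolding g_def by (intro continuous_intros cont)
  have ga: "g a = 0" unfolding g_def by simp
  define d where "d = (F b - F a) / 2"
  have eba: "\<epsilon> * (b - a) = (F b - F a) / 2" unfolding \<epsilon>_def using ab' by (simp add: field_simps)
  have gb: "g b = d" unfolding g_def d_def using eba by (simp add: algebra_simps)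
  have dpos: "d > 0" unfolding d_def using Fab by simp
  define S where "S = N \<inter> {a..b}"
  have Nneg: "negligible N" using N by (simp add: negligible_iff_null_sets)
  have Sneg: "negligible S" unfolding S_def by (rule negligible_subset[OF Nneg]) blast
  have gS: "negligible (g ` S)" by (rule ac_null_image[OF gac gcont _ Sneg ab']) (auto simp: S_def)
  obtain lv where lv: "lv \<in> {0<..<d}" "lv \<notin> g ` S"
    using interval_not_null[OF dpos gS[unfolded negligible_iff_null_sets]] by blast
  define Z where "Z = {x \<in> {a..b}. g x = lv}"
  have Zcl: "closed Z" unfolding Z_def by (rule continuous_closed_preimage_constant[OF gcont]) simp
  have Zne: "Z \<noteq> {}"
  proof -
    obtain x where "a \<le> x" "x \<le> b" "g x = lv" using IVT'[of g a lv b] ga gb lv(1) ab gcont by auto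
    thus ?thesis unfolding Z_def by auto
  qed
  have Zbdd: "bdd_below Z" unfolding Z_def by (rule bdd_belowI[of _ a]) auto
  define t where "t = Inf Z"
  have tZ: "t \<in> Z" unfolding t_def using closed_contains_Inf[OF Zne Zbdd Zcl] .
  have tmin: "t \<le> x" if "x \<in> Z" for x unfolding t_def using cInf_lower[OF that Zbdd] .
  have gt: "g t = lv" and tab: "a \<le> t" "t \<le> b" using tZ unfolding Z_def by auto
  have ta: "a < t" using tab ga gt lv(1) by (cases "t = a") auto
  have tN: "t \<notin> N"
  proof
    assume "t \<in> N"
    hence "t \<in> S" unfolding S_def using tab by auto
    hence "lv \<in> g ` S" using gt by force
    thus False using lv(2) by blast
  qed
  have e2: "\<epsilon>/2 > 0" using \<epsilon> by simp
  obtain \<delta> where \<delta>: "\<delta> > 0" and dl: "\<forall>s. 0 < s \<and> s < \<delta> \<longrightarrow> F t - F (t - s) \<le> \<epsilon>/2 * s"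
  proof -
    have "t \<in> {a<..b}" using ta tab by simp
    from dini[OF this tN, rule_format, OF e2] show ?thesis using that by blast
  qed
  define s where "s = min \<delta> (t - a) / 2"
  have s: "0 < s" "s < \<delta>" "s \<le> t - a" using \<delta> ta unfolding s_def by (auto simp: min_def)
  have "F t - F (t - s) \<le> \<epsilon>/2 * s" using dl s by blast
  moreover have "g t - g (t - s) = F t - F (t - s) - \<epsilon> * s" unfolding g_def by (simp add: algebra_simps)
  moreover have "\<epsilon> * s > 0" using \<epsilon> s by simp
  ultimately have "g t - g (t - s) < 0" by linarith
  hence gts: "lv < g (t - s)" using gt by simp
  have cont2: "continuous_on {a..t - s} g" using gcont by (rule continuous_on_subset) (use tab s in auto)
  obtain x where x: "a \<le> x" "x \<le> t - s" "g x = lv"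
    using IVT'[of g a lv "t - s"] ga gts lv(1) s cont2 by auto
  have "x \<in> Z" unfolding Z_def using x tab s by auto
  hence "t \<le> x" by (rule tmin)
  thus False using x s by simp
qed


lemma lip_comp_cont:
  fixes z :: "real \<Rightarrow> 'a::real_normed_vector" and \<phi> :: "'a \<Rightarrow> real"
  assumes zc: "continuous_on A z" and zC: "\<And>x. x \<in> A \<Longrightarrow> z x \<in> C"
    and lip: "\<And>u w. u \<in> C \<Longrightarrow> w \<in> C \<Longrightarrow> \<bar>\<phi> u - \<phi> w\<bar> \<le> M * norm (u - w)"
  shows "continuous_on A (\<lambda>x. \<phi> (z x))"
  unfolding continuous_on_iff
proof (intro ballI allI impI)
  fix x e assume x: "x \<in> A" and e: "(e::real) > 0"
  have e': "e / (\<bar>M\<bar> + 1) > 0" using e by (simp add: abs_if)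
  obtain d where d: "d > 0" "\<forall>x'\<in>A. dist x' x < d \<longrightarrow> dist (z x') (z x) < e / (\<bar>M\<bar> + 1)"
    using zc[unfolded continuous_on_iff] x e' by blast
  show "\<exists>d>0. \<forall>x'\<in>A. dist x' x < d \<longrightarrow> dist (\<phi> (z x')) (\<phi> (z x)) < e"
  proof (intro exI[of _ d] conjI ballI impI d(1))
    fix x' assume x': "x' \<in> A" "dist x' x < d"
    have "dist (\<phi> (z x')) (\<phi> (z x)) \<le> M * norm (z x' - z x)"
      using lip[OF zC[OF x'(1)] zC[OF x]] by (simp add: dist_real_def)
    also have "\<dots> \<le> \<bar>M\<bar> * norm (z x' - z x)" by (intro mult_right_mono) auto
    also have "\<dots> \<le> \<bar>M\<bar> * (e / (\<bar>M\<bar> + 1))"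
      using d(2) x' by (intro mult_left_mono) (auto simp: dist_norm less_imp_le)
    also have "\<dots> < e" using e by (simp add: field_simps)
    finally show "dist (\<phi> (z x')) (\<phi> (z x)) < e" .
  qed
qed

lemma lip_comp_ac:
  fixes z :: "real \<Rightarrow> 'a::real_normed_vector" and \<phi> :: "'a \<Rightarrow> real"
  assumes ac: "abs_cont_on a b z" and zC: "\<And>x. a \<le> x \<Longrightarrow> x \<le> b \<Longrightarrow> z x \<in> C"
    and lip: "\<And>u w. u \<in> C \<Longrightarrow> w \<in> C \<Longrightarrow> \<bar>\<phi> u - \<phi> w\<bar> \<le> M * norm (u - w)"
  shows "abs_cont_on a b (\<lambda>x. \<phi> (z x))"
  unfolding abs_cont_on_def
proof (intro allI impI)
  fix e :: real assume e: "e > 0"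
  have e': "e / (\<bar>M\<bar> + 1) > 0" using e by (simp add: abs_if)
  obtain \<delta> where d: "\<delta> > 0" and acd: "\<forall>(n::nat) (s::nat\<Rightarrow>real) (t::nat\<Rightarrow>real). (\<forall>k<n. a \<le> s k \<and> s k \<le> t k \<and> t k \<le> b) \<and>
        (\<forall>k<n. \<forall>l<n. k \<noteq> l \<longrightarrow> t k \<le> s l \<or> t l \<le> s k) \<and> (\<Sum>k<n. t k - s k) < \<delta>
        \<longrightarrow> (\<Sum>k<n. norm (z (t k) - z (s k))) < e / (\<bar>M\<bar> + 1)"
    using ac[unfolded abs_cont_on_def, rule_format, OF e'] by blast
  show "\<exists>\<delta>>0. \<forall>(n::nat) (s::nat\<Rightarrow>real) (t::nat\<Rightarrow>real). (\<forall>k<n. a \<le> s k \<and> s k \<le> t k \<and> t k \<le> b) \<and>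
        (\<forall>k<n. \<forall>l<n. k \<noteq> l \<longrightarrow> t k \<le> s l \<or> t l \<le> s k) \<and> (\<Sum>k<n. t k - s k) < \<delta>
        \<longrightarrow> (\<Sum>k<n. norm (\<phi> (z (t k)) - \<phi> (z (s k)))) < e"
  proof (intro exI[of _ \<delta>] conjI allI impI d)
    fix n :: nat and s t :: "nat \<Rightarrow> real"
    assume H: "(\<forall>k<n. a \<le> s k \<and> s k \<le> t k \<and> t k \<le> b) \<and>
        (\<forall>k<n. \<forall>l<n. k \<noteq> l \<longrightarrow> t k \<le> s l \<or> t l \<le> s k) \<and> (\<Sum>k<n. t k - s k) < \<delta>"
    have A: "(\<Sum>k<n. norm (z (t k) - z (s k))) < e / (\<bar>M\<bar> + 1)" using acd H by blast
    have "(\<Sum>k<n. norm (\<phi> (z (t k)) - \<phi> (z (s k)))) \<le> (\<Sum>k<n. \<bar>M\<bar> * norm (z (t k) - z (s k)))"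
    proof (rule sum_mono)
      fix i assume "i \<in> {..<n}"
      hence "a \<le> s i" "s i \<le> b" "a \<le> t i" "t i \<le> b" using H by force+
      hence "\<bar>\<phi> (z (t i)) - \<phi> (z (s i))\<bar> \<le> M * norm (z (t i) - z (s i))" using lip zC by blast
      also have "\<dots> \<le> \<bar>M\<bar> * norm (z (t i) - z (s i))" by (intro mult_right_mono) auto
      finally show "norm (\<phi> (z (t i)) - \<phi> (z (s i))) \<le> \<bar>M\<bar> * norm (z (t i) - z (s i))" by simp
    qed
    also have "\<dots> = \<bar>M\<bar> * (\<Sum>k<n. norm (z (t k) - z (s k)))" by (simp add: sum_distrib_left)
    also have "\<dots> \<le> \<bar>M\<bar> * (e / (\<bar>M\<bar> + 1))" using A by (intro mult_left_mono) auto
    also have "\<dots> < e" using e by (simp add: field_simps)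
    finally show "(\<Sum>k<n. norm (\<phi> (z (t k)) - \<phi> (z (s k)))) < e" .
  qed
qed


lemma key_est:
  fixes z :: "real \<Rightarrow> 'a::real_inner" and j eta :: "'a \<Rightarrow> real"
  assumes zd: "(z has_vector_derivative v) (at t)" and tpos: "0 < t"
    and zC: "\<And>x. 0 \<le> x \<Longrightarrow> z x \<in> C"
    and jd: "(j has_derivative (\<lambda>h. inner (gj (z t)) h)) (at (z t))"
    and g: "g \<in> subdiff eta (z t)" and nc: "n \<in> normal_cone C (z t)"
    and v: "v = - gj (z t) - g - n"
  shows "\<forall>\<epsilon>>0. \<exists>\<delta>>0. \<forall>s. 0 < s \<and> s < \<delta> \<longrightarrow>
           s * (norm v)^2 - \<epsilon> * s \<le> (j (z (t - s)) + eta (z (t - s))) - (j (z t) + eta (z t))"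
proof (intro allI impI)
  fix \<epsilon> :: real assume e: "\<epsilon> > 0"
  define V where "V = norm v"
  have V0: "V \<ge> 0" unfolding V_def by simp
  define e1 where "e1 = \<epsilon> / (2 * (V + 1))"
  define e2 where "e2 = min 1 (\<epsilon> / (2 * (V + 1)))"
  have e1: "e1 > 0" unfolding e1_def using e V0 by simp
  have e2: "e2 > 0" "e2 \<le> 1" unfolding e2_def using e V0 by auto
  have zd': "(z has_derivative (\<lambda>h. h *\<^sub>R v)) (at t)" using zd by (simp add: has_vector_derivative_def)
  obtain dz where dz: "dz > 0" "\<forall>y. norm (y - t) < dz \<longrightarrow> norm (z y - z t - (y - t) *\<^sub>R v) \<le> e2 * norm (y - t)"
    using zd'[unfolded has_derivative_within_alt] e2(1) by blast
  obtain dj where dj: "dj > 0" "\<forall>y. norm (y - z t) < dj \<longrightarrow> norm (j y - j (z t) - inner (gj (z t)) (y - z t)) \<le> e1 * norm (y - z t)"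
    using jd[unfolded has_derivative_within_alt] e1 by blast
  define \<delta> where "\<delta> = min (min dz t) (dj / (V + 1))"
  have dpos: "\<delta> > 0" unfolding \<delta>_def using dz dj tpos V0 by simp
  show "\<exists>\<delta>>0. \<forall>s. 0 < s \<and> s < \<delta> \<longrightarrow>
           s * (norm v)^2 - \<epsilon> * s \<le> (j (z (t - s)) + eta (z (t - s))) - (j (z t) + eta (z t))"
  proof (intro exI[of _ \<delta>] conjI allI impI dpos)
    fix s assume s: "0 < s \<and> s < \<delta>"
    define u where "u = z t"
    define w where "w = z (t - s)"
    define r where "r = w - u + s *\<^sub>R v"
    have sdz: "s < dz" and st: "s \<le> t" and sdj0: "s < dj / (V + 1)"
      using s unfolding \<delta>_def by auto
    have sdj: "s * (V + 1) < dj" using sdj0 V0 by (simp add: pos_less_divide_eq)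
    have r: "norm r \<le> e2 * s"
    proof -
      have "norm ((t - s) - t) < dz" using s sdz by simp
      hence "norm (z (t - s) - z t - ((t - s) - t) *\<^sub>R v) \<le> e2 * norm ((t - s) - t)" using dz(2) by blast
      thus ?thesis unfolding r_def w_def u_def using s by (simp add: algebra_simps)
    qed
    have wu: "w - u = r - s *\<^sub>R v" unfolding r_def by simp
    have nwu: "norm (w - u) \<le> s * (V + 1)"
    proof -
      have "norm (w - u) \<le> norm r + norm (s *\<^sub>R v)" unfolding wu by (rule norm_triangle_ineq4)
      also have "\<dots> \<le> e2 * s + s * V" using r s unfolding V_def by simp
      also have "\<dots> \<le> s * (V + 1)" using e2 s by (simp add: algebra_simps mult_left_le_one_le)
      finally show ?thesis .
    qed
    have Jest: "j w - j u \<ge> inner (gj u) (w - u) - e1 * norm (w - u)"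
    proof -
      have "norm (w - u) < dj" using nwu sdj by linarith
      hence "norm (j w - j u - inner (gj u) (w - u)) \<le> e1 * norm (w - u)" using dj(2) unfolding u_def by blast
      thus ?thesis by (simp add: abs_le_iff)
    qed
    have Eest: "eta w - eta u \<ge> inner g (w - u)" using g unfolding subdiff_def u_def by (simp add: algebra_simps)
    have wC: "w \<in> C" unfolding w_def using zC st by simp
    have Nest: "inner n (w - u) \<le> 0" using nc wC unfolding normal_cone_def u_def by blast
    have "(j w + eta w) - (j u + eta u) \<ge> inner (gj u + g + n) (w - u) - e1 * norm (w - u)"
      using Jest Eest Nest by (simp add: inner_add_left)
    moreover have "inner (gj u + g + n) (w - u) = s * V^2 + inner (- v) r"
    proof -
      have "gj u + g + n = - v" using v unfolding u_def by simp
      hence "inner (gj u + g + n) (w - u) = inner (- v) (r - s *\<^sub>R v)" using wu by simp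
      also have "\<dots> = s * V^2 + inner (- v) r"
        unfolding V_def by (simp add: inner_diff_right power2_norm_eq_inner)
      finally show ?thesis .
    qed
    moreover have "- inner (- v) r \<le> V * (e2 * s)"
    proof -
      have "- inner (- v) r = inner v r" by simp
      also have "\<dots> \<le> norm v * norm r" by (rule norm_cauchy_schwarz)
      also have "\<dots> \<le> V * (e2 * s)" unfolding V_def using r by (intro mult_left_mono) auto
      finally show ?thesis .
    qed
    moreover have "e1 * norm (w - u) \<le> e1 * (s * (V + 1))" using nwu e1 by (intro mult_left_mono) auto
    moreover have "e1 * (s * (V + 1)) = \<epsilon> / 2 * s" unfolding e1_def using V0 by (simp add: field_simps)
    moreover have "V * (e2 * s) \<le> \<epsilon> / 2 * s"
    proof -
      have "V * e2 \<le> V * (\<epsilon> / (2 * (V + 1)))" unfolding e2_def using V0 by (intro mult_left_mono) auto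
      also have "\<dots> \<le> \<epsilon> / 2" using V0 e by (simp add: field_simps)
      finally show ?thesis using s by (simp add: mult.assoc[symmetric] mult_right_mono)
    qed
    ultimately have "(j w + eta w) - (j u + eta u) \<ge> s * V^2 - \<epsilon> * s" by linarith
    thus "s * (norm v)^2 - \<epsilon> * s \<le> (j (z (t - s)) + eta (z (t - s))) - (j (z t) + eta (z t))"
      unfolding V_def w_def u_def by simp
  qed
qed


lemma j_lip:
  fixes C U :: "'a::real_inner set" and j :: "'a \<Rightarrow> real" and gj :: "'a \<Rightarrow> 'a"
  assumes C_ne: "C \<noteq> {}" and C_bdd: "bounded C" and C_cvx: "convex C" and CU: "C \<subseteq> U"
    and j_diff: "\<And>u. u \<in> U \<Longrightarrow> (j has_derivative (\<lambda>h. inner (gj u) h)) (at u)"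
    and gj_lip: "\<And>u v. u \<in> U \<Longrightarrow> v \<in> U \<Longrightarrow> norm (gj u - gj v) \<le> L * norm (u - v)"
  shows "\<exists>M. \<forall>u\<in>C. \<forall>w\<in>C. \<bar>j u - j w\<bar> \<le> M * norm (u - w)"
proof -
  obtain c0 where c0: "c0 \<in> C" using C_ne by blast
  obtain R where R: "\<forall>x\<in>C. norm x \<le> R" using C_bdd bounded_iff by blast
  have R0: "0 \<le> R" using R c0 norm_ge_zero order_trans by blast
  define B where "B = norm (gj c0) + \<bar>L\<bar> * (2 * R)"
  have B0: "0 \<le> B" unfolding B_def using R0 by simp
  have gjB: "norm (gj x) \<le> B" if x: "x \<in> C" for x
  proof -
    have "norm (gj x) \<le> norm (gj c0) + norm (gj x - gj c0)" by (rule norm_triangle_sub)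
    also have "norm (gj x - gj c0) \<le> L * norm (x - c0)" using gj_lip x c0 CU by blast
    also have "L * norm (x - c0) \<le> \<bar>L\<bar> * norm (x - c0)" by (intro mult_right_mono) auto
    also have "norm (x - c0) \<le> 2 * R"
    proof -
      have "norm (x - c0) \<le> norm x + norm c0" by (rule norm_triangle_ineq4)
      also have "\<dots> \<le> 2 * R" using R x c0 by (smt (verit) bspec)
      finally show ?thesis .
    qed
    hence "\<bar>L\<bar> * norm (x - c0) \<le> \<bar>L\<bar> * (2 * R)" by (intro mult_left_mono) auto
    finally show ?thesis unfolding B_def by simp
  qed
  have "norm (j x - j y) \<le> B * norm (x - y)" if "x \<in> C" "y \<in> C" for x y
  proof (rule differentiable_bound[OF C_cvx _ _ that])
    fix u assume u: "u \<in> C"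
    show "(j has_derivative (\<lambda>h. inner (gj u) h)) (at u within C)"
      using j_diff[of u] u CU by (auto intro: has_derivative_at_withinI)
    show "onorm (\<lambda>h. inner (gj u) h) \<le> B"
    proof (rule onorm_bound[OF B0])
      fix h
      have "norm (inner (gj u) h) \<le> norm (gj u) * norm h" using Cauchy_Schwarz_ineq2 by simp
      also have "\<dots> \<le> B * norm h" using gjB[OF u] by (intro mult_right_mono) auto
      finally show "norm (inner (gj u) h) \<le> B * norm h" .
    qed
  qed
  thus ?thesis by auto
qed

lemma eta_lip:
  fixes C :: "'a::real_normed_vector set" and eta Leta :: "'a \<Rightarrow> real"
  assumes C_bdd: "bounded C"
    and Leta_bdd: "\<And>B. bounded B \<Longrightarrow> bounded (Leta ` B)"
    and Leta_ge: "\<And>u w. eta w \<le> eta u \<Longrightarrow> w \<noteq> u \<Longrightarrow> (eta u - eta w) / norm (u - w) \<le> Leta u"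
  shows "\<exists>M. \<forall>u\<in>C. \<forall>w\<in>C. \<bar>eta u - eta w\<bar> \<le> M * norm (u - w)"
proof -
  obtain K where K: "\<forall>y\<in>Leta ` C. norm y \<le> K" using Leta_bdd[OF C_bdd] bounded_iff by blast
  have one: "eta u - eta w \<le> K * norm (u - w)" if "u \<in> C" "eta w \<le> eta u" "w \<noteq> u" for u w
  proof -
    have "(eta u - eta w) / norm (u - w) \<le> K" using Leta_ge[OF that(2,3)] K that(1) by force
    moreover have "norm (u - w) > 0" using that(3) by simp
    ultimately show ?thesis by (simp add: pos_divide_le_eq)
  qed
  have "\<bar>eta u - eta w\<bar> \<le> K * norm (u - w)" if "u \<in> C" "w \<in> C" for u w
  proof (cases "u = w")
    case True thus ?thesis by simp
  next
    case False
    show ?thesis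
    proof (cases "eta w \<le> eta u")
      case True thus ?thesis using one[OF that(1) True] False by simp
    next
      case F2: False
      have "eta w - eta u \<le> K * norm (w - u)" using one[OF that(2)] F2 False by simp
      thus ?thesis using F2 by (simp add: norm_minus_commute)
    qed
  qed
  thus ?thesis by blast
qed


theorem mainTheorem12:
  fixes C U :: "'a::{real_inner, complete_space} set"
    and j eta Leta :: "'a \<Rightarrow> real"
    and gj :: "'a \<Rightarrow> 'a"
    and L :: real
    and z :: "real \<Rightarrow> 'a"
  assumes C_ne: "C \<noteq> {}" and C_bdd: "bounded C" and C_cvx: "convex C" and C_cl: "closed C"
    and U_open: "open U" and U_cvx: "convex U" and CU: "C \<subseteq> U"
    and j_diff: "\<And>u. u \<in> U \<Longrightarrow> (j has_derivative (\<lambda>h. inner (gj u) h)) (at u)"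
    and gj_lip: "\<And>u v. u \<in> U \<Longrightarrow> v \<in> U \<Longrightarrow> norm (gj u - gj v) \<le> L * norm (u - v)"
    and eta_cvx: "convex_on UNIV eta"
    and eta_lsc: "lsc eta"
    and eta_loclip: "locally_lipschitz eta"
    and eta_bdd_below: "\<exists>m. \<forall>u\<in>C. m \<le> eta u"
    and Leta_bdd: "\<And>B. bounded B \<Longrightarrow> bounded (Leta ` B)"
    and Leta_ge: "\<And>u w. eta w \<le> eta u \<Longrightarrow> w \<noteq> u \<Longrightarrow> (eta u - eta w) / norm (u - w) \<le> Leta u"
    and sol: "strong_solution C gj eta z"
    and nonstat: "0 \<notin> S_map C gj eta (z 0)"
  shows "\<exists>T>0. (j (z T) + eta (z T)) < (SUP t\<in>{0..T}. j (z t) + eta (z t))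
               \<and> (SUP t\<in>{0..T}. j (z t) + eta (z t)) \<le> j (z 0) + eta (z 0)"
proof -
  define F where "F x = j (z x) + eta (z x)" for x
  have zC: "\<And>x. 0 \<le> x \<Longrightarrow> z x \<in> C" using sol unfolding strong_solution_def by blast
  have zcont: "continuous_on {0..} z" using sol unfolding strong_solution_def by blast
  have zac: "\<And>a b. 0 < a \<Longrightarrow> a \<le> b \<Longrightarrow> abs_cont_on a b z" using sol unfolding strong_solution_def by blast
  have AEs: "AE t in lborel. 0 < t \<longrightarrow>
        (\<exists>v. (z has_vector_derivative v) (at t) \<and> v \<in> S_map C gj eta (z t))"
    using sol unfolding strong_solution_def by blast
  from AEs obtain N0 where N0: "{x \<in> space lborel. \<not> (0 < x \<longrightarrow>
        (\<exists>v. (z has_vector_derivative v) (at x) \<and> v \<in> S_map C gj eta (z x)))} \<subseteq> N0"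
      "emeasure lborel N0 = 0" "N0 \<in> sets lborel"
    by (rule AE_E)
  have Nnull: "N0 \<in> null_sets lebesgue"
    using N0(2,3) by (intro null_sets_completionI) (simp add: null_sets_def)
  have good: "\<exists>v. (z has_vector_derivative v) (at t) \<and> v \<in> S_map C gj eta (z t)"
    if "0 < t" "t \<notin> N0" for t
    using N0(1) that by auto
  obtain Mj where Mj: "\<forall>u\<in>C. \<forall>w\<in>C. \<bar>j u - j w\<bar> \<le> Mj * norm (u - w)"
    using j_lip[OF C_ne C_bdd C_cvx CU j_diff gj_lip] by blast
  obtain Me where Me: "\<forall>u\<in>C. \<forall>w\<in>C. \<bar>eta u - eta w\<bar> \<le> Me * norm (u - w)"
    using eta_lip[OF C_bdd Leta_bdd Leta_ge] by blast
  have lipF: "\<bar>(j u + eta u) - (j w + eta w)\<bar> \<le> (Mj + Me) * norm (u - w)" if "u \<in> C" "w \<in> C" for u w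
  proof -
    have "\<bar>(j u + eta u) - (j w + eta w)\<bar> \<le> \<bar>j u - j w\<bar> + \<bar>eta u - eta w\<bar>" by simp
    also have "\<dots> \<le> Mj * norm (u - w) + Me * norm (u - w)" using Mj Me that by (intro add_mono) auto
    finally show ?thesis by (simp add: algebra_simps)
  qed
  have Fcont: "continuous_on {0..} F"
    unfolding F_def by (rule lip_comp_cont[OF zcont _ lipF]) (auto intro: zC)
  have goodF: "\<exists>v. (z has_vector_derivative v) (at t) \<and> v \<in> S_map C gj eta (z t) \<and>
      (\<forall>\<epsilon>>0. \<exists>\<delta>>0. \<forall>s. 0 < s \<and> s < \<delta> \<longrightarrow> s * (norm v)^2 - \<epsilon> * s \<le> F (t - s) - F t)"
    if t: "0 < t" "t \<notin> N0" for t
  proof -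
    obtain v where v: "(z has_vector_derivative v) (at t)" "v \<in> S_map C gj eta (z t)"
      using good[OF t] by blast
    obtain g n where gn: "v = - gj (z t) - g - n" "g \<in> subdiff eta (z t)" "n \<in> normal_cone C (z t)"
      using v(2) unfolding S_map_def by blast
    have jd: "(j has_derivative (\<lambda>h. inner (gj (z t)) h)) (at (z t))"
      using j_diff zC[of t] t CU by auto
    have "\<forall>\<epsilon>>0. \<exists>\<delta>>0. \<forall>s. 0 < s \<and> s < \<delta> \<longrightarrow> s * (norm v)^2 - \<epsilon> * s \<le> F (t - s) - F t"
      using key_est[where z=z and v=v and t=t and C=C and j=j and gj=gj and g=g and eta=eta and n=n, OF v(1) t(1) zC jd gn(2) gn(3) gn(1)] unfolding F_def by simp
    thus ?thesis using v by blast
  qed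
  have mono: "F b \<le> F a" if ab: "0 < a" "a \<le> b" for a b
  proof (rule ac_mono[OF ab(2) _ _ Nnull])
    show "abs_cont_on a b F"
      unfolding F_def by (rule lip_comp_ac[OF zac[OF ab] _ lipF]) (use ab zC in auto)
    show "continuous_on {a..b} F" by (rule continuous_on_subset[OF Fcont]) (use ab in auto)
    fix t assume t: "t \<in> {a<..b}" "t \<notin> N0"
    have t0: "0 < t" using t ab by simp
    from goodF[OF t0 t(2)] obtain v where v0: "(z has_vector_derivative v) (at t) \<and> v \<in> S_map C gj eta (z t) \<and> (\<forall>\<epsilon>>0. \<exists>\<delta>>0. \<forall>s. 0 < s \<and> s < \<delta> \<longrightarrow> s * (norm v)^2 - \<epsilon> * s \<le> F (t - s) - F t)"
      by (rule exE)
    have v: "\<forall>\<epsilon>>0. \<exists>\<delta>>0. \<forall>s. 0 < s \<and> s < \<delta> \<longrightarrow> s * (norm v)^2 - \<epsilon> * s \<le> F (t - s) - F t"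
      using v0 by (rule conjunct2[THEN conjunct2])
    show "\<forall>\<epsilon>>0. \<exists>\<delta>>0. \<forall>s. 0 < s \<and> s < \<delta> \<longrightarrow> F t - F (t - s) \<le> \<epsilon> * s"
    proof (intro allI impI)
      fix \<epsilon> :: real assume e: "\<epsilon> > 0"
      obtain \<delta> where d: "\<delta> > 0" "\<forall>s. 0 < s \<and> s < \<delta> \<longrightarrow> s * (norm v)^2 - \<epsilon> * s \<le> F (t - s) - F t"
        using v[rule_format, OF e] by blast
      show "\<exists>\<delta>>0. \<forall>s. 0 < s \<and> s < \<delta> \<longrightarrow> F t - F (t - s) \<le> \<epsilon> * s"
      proof (intro exI[of _ \<delta>] conjI allI impI d(1))
        fix s assume s: "0 < s \<and> s < \<delta>"
        have "s * (norm v)^2 \<ge> 0" using s by simp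
        moreover have "s * (norm v)^2 - \<epsilon> * s \<le> F (t - s) - F t" using d(2)[rule_format, OF s] .
        ultimately show "F t - F (t - s) \<le> \<epsilon> * s" by linarith
      qed
    qed
  qed
  have mono0: "F b \<le> F 0" if b: "0 \<le> b" for b
  proof (rule ccontr)
    assume "\<not> F b \<le> F 0"
    hence lt: "F 0 < F b" by simp
    hence b0: "0 < b" using b by (cases "b = 0") auto
    obtain d where d: "d > 0" "\<forall>x'\<in>{0..}. dist x' 0 < d \<longrightarrow> dist (F x') (F 0) < F b - F 0"
    proof -
      have "(0::real) \<in> {0..}" by simp
      from Fcont[unfolded continuous_on_iff, rule_format, OF this, of "F b - F 0"] lt
      show ?thesis using that by auto
    qed
    define x where "x = min (d/2) b"
    have x: "0 < x" "x \<le> b" "x < d" using d b0 unfolding x_def by auto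
    have "dist (F x) (F 0) < F b - F 0" using d(2) x by (simp add: dist_real_def)
    hence "F x < F b" by (simp add: dist_real_def abs_less_iff)
    moreover have "F b \<le> F x" using mono[OF x(1) x(2)] .
    ultimately show False by simp
  qed
  have Feq: "(\<lambda>t. j (z t) + eta (z t)) = F" unfolding F_def by simp
  show ?thesis
  proof (cases "\<exists>T>0. F T < F 0")
    case True
    then obtain T where T: "T > 0" "F T < F 0" by blast
    have S: "(SUP t\<in>{0..T}. F t) = F 0"
      by (rule cSup_eq_maximum) (use T mono0 in auto)
    have "j (z T) + eta (z T) = F T" "j (z 0) + eta (z 0) = F 0" by (simp_all add: F_def)
    thus ?thesis unfolding Feq using T S by (intro exI[of _ T]) simp
  next
    case False
    hence Fc: "F T = F 0" if "T > 0" for T using mono0[of T] that by force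
    have v0: "v = 0" if t: "0 < t" "t \<notin> N0" and v: "(z has_vector_derivative v) (at t)" for t v
    proof -
      obtain v' where v': "(z has_vector_derivative v') (at t)"
        "\<forall>\<epsilon>>0. \<exists>\<delta>>0. \<forall>s. 0 < s \<and> s < \<delta> \<longrightarrow> s * (norm v')^2 - \<epsilon> * s \<le> F (t - s) - F t"
        using goodF[OF t] by blast
      have vv: "v' = v" using vector_derivative_unique_at[OF v'(1) v] .
      have "(norm v)^2 \<le> 0"
      proof (rule ccontr)
        assume "\<not> (norm v)^2 \<le> 0"
        hence pos: "(norm v)^2 / 2 > 0" by simp
        obtain \<delta> where d: "\<delta> > 0" "\<forall>s. 0 < s \<and> s < \<delta> \<longrightarrow> s * (norm v)^2 - (norm v)^2 / 2 * s \<le> F (t - s) - F t"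
          using v'(2) pos vv by blast
        define s where "s = min \<delta> t / 2"
        have s: "0 < s" "s < \<delta>" "s < t" using d t unfolding s_def by auto
        have "F (t - s) = F t" using Fc[of "t - s"] Fc[of t] s t by simp
        hence "s * (norm v)^2 - (norm v)^2 / 2 * s \<le> 0" using d(2) s by force
        moreover have "s * (norm v)^2 - (norm v)^2 / 2 * s = s * ((norm v)^2 / 2)" by (simp add: algebra_simps)
        moreover have "s * ((norm v)^2 / 2) > 0" using s pos by simp
        ultimately show False by linarith
      qed
      thus ?thesis by simp
    qed
    have zconst: "z b = z a" if ab: "0 < a" "a \<le> b" for a b
    proof -
      have ine: "inner (z b) e \<le> inner (z a) e" for e
      proof (rule ac_mono[OF ab(2) _ _ Nnull, where F = "\<lambda>x. inner (z x) e"])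
        have lipi: "\<bar>inner u e - inner w e\<bar> \<le> norm e * norm (u - w)" if "u \<in> UNIV" "w \<in> UNIV" for u w
        proof -
          have "\<bar>inner u e - inner w e\<bar> = \<bar>inner (u - w) e\<bar>" by (simp add: inner_diff_left)
          also have "\<dots> \<le> norm (u - w) * norm e" by (rule Cauchy_Schwarz_ineq2)
          finally show ?thesis by (simp add: mult.commute)
        qed
        show "abs_cont_on a b (\<lambda>x. inner (z x) e)"
          by (rule lip_comp_ac[OF zac[OF ab], of UNIV "\<lambda>u. inner u e", OF _ lipi]) auto
        have "continuous_on {a..b} z" by (rule continuous_on_subset[OF zcont]) (use ab in auto)
        thus "continuous_on {a..b} (\<lambda>x. inner (z x) e)" by (intro continuous_intros)
        fix t assume t: "t \<in> {a<..b}" "t \<notin> N0"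
        have t0: "0 < t" using t ab by simp
        obtain v where v: "(z has_vector_derivative v) (at t)" using good[OF t0 t(2)] by blast
        have vz: "v = 0" using v0[OF t0 t(2) v] .
        have zd: "(z has_derivative (\<lambda>h. h *\<^sub>R 0)) (at t)"
          using v vz by (simp add: has_vector_derivative_def)
        show "\<forall>\<epsilon>>0. \<exists>\<delta>>0. \<forall>s. 0 < s \<and> s < \<delta> \<longrightarrow> inner (z t) e - inner (z (t - s)) e \<le> \<epsilon> * s"
        proof (intro allI impI)
          fix \<epsilon> :: real assume e: "\<epsilon> > 0"
          have ne1: "norm e + 1 > 0" by (simp add: add_nonneg_pos)
          have e': "\<epsilon> / (norm e + 1) > 0" using e ne1 by (rule divide_pos_pos)
          obtain d where d: "d > 0" "\<forall>y. norm (y - t) < d \<longrightarrow> norm (z y - z t - (y - t) *\<^sub>R 0) \<le> \<epsilon> / (norm e + 1) * norm (y - t)"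
            using zd[unfolded has_derivative_within_alt] e' by blast
          show "\<exists>\<delta>>0. \<forall>s. 0 < s \<and> s < \<delta> \<longrightarrow> inner (z t) e - inner (z (t - s)) e \<le> \<epsilon> * s"
          proof (intro exI[of _ d] conjI allI impI d(1))
            fix s assume s: "0 < s \<and> s < d"
            have nz: "norm (z (t - s) - z t) \<le> \<epsilon> / (norm e + 1) * s"
              using d(2)[rule_format, of "t - s"] s by simp
            have "inner (z t) e - inner (z (t - s)) e = inner (z t - z (t - s)) e" by (simp add: inner_diff_left)
            also have "\<dots> \<le> norm (z t - z (t - s)) * norm e" by (rule norm_cauchy_schwarz)
            also have "\<dots> \<le> (\<epsilon> / (norm e + 1) * s) * norm e"
              using nz by (intro mult_right_mono) (auto simp: norm_minus_commute)
            also have "\<dots> \<le> \<epsilon> * s"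
            proof -
              have q: "norm e / (norm e + 1) \<le> 1" using ne1 by (simp add: divide_le_eq_1)
              have "\<epsilon> / (norm e + 1) * norm e = \<epsilon> * (norm e / (norm e + 1))" by simp
              also have "\<dots> \<le> \<epsilon> * 1" using q e by (intro mult_left_mono) auto
              finally have h: "\<epsilon> / (norm e + 1) * norm e \<le> \<epsilon>" by simp
              have "(\<epsilon> / (norm e + 1) * s) * norm e = (\<epsilon> / (norm e + 1) * norm e) * s" by simp
              also have "\<dots> \<le> \<epsilon> * s" using h s by (intro mult_right_mono) auto
              finally show ?thesis .
            qed
            finally show "inner (z t) e - inner (z (t - s)) e \<le> \<epsilon> * s" .
          qed
        qed
      qed
      have "inner (z b - z a) (z b - z a) \<le> 0" using ine[of "z b - z a"] by (simp add: inner_diff_left)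
      hence "inner (z b - z a) (z b - z a) = 0" using inner_ge_zero[of "z b - z a"] by linarith
      hence "z b - z a = 0" by simp
      thus ?thesis by simp
    qed
    have z01: "z 0 = z 1"
    proof (rule ccontr)
      assume ne: "z 0 \<noteq> z 1"
      hence ep: "dist (z 1) (z 0) > 0" by simp
      obtain d where d: "d > 0" "\<forall>x'\<in>{0..}. dist x' 0 < d \<longrightarrow> dist (z x') (z 0) < dist (z 1) (z 0)"
      proof -
        have "(0::real) \<in> {0..}" by simp
        from zcont[unfolded continuous_on_iff, rule_format, OF this ep]
        show ?thesis using that by auto
      qed
      define x where "x = min (d/2) 1"
      have x: "0 < x" "x \<le> 1" "x < d" using d unfolding x_def by auto
      have "dist (z x) (z 0) < dist (z 1) (z 0)" using d(2) x by (simp add: dist_real_def)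
      moreover have "z x = z 1" using zconst[OF x(1) x(2)] by simp
      ultimately show False by simp
    qed
    obtain t where t: "t \<in> {0<..<1}" "t \<notin> N0" using interval_not_null[OF _ Nnull, of 0 1] by auto
    obtain v where v: "(z has_vector_derivative v) (at t)" "v \<in> S_map C gj eta (z t)"
      using good[of t] t by auto
    have "v = 0" using v0[of t v] t v by auto
    moreover have "z t = z 0" using zconst[of t 1] t z01 by auto
    ultimately show ?thesis using v(2) nonstat by simp
  qed
qed

end
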